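(* Every blocking set of $\operatorname{PG}(2,q)$ with at most $2q$ points contains exactly one minimal blocking set.
   Context: $q$ is a prime power and $\operatorname{PG}(2,q)$ is the incidence structure of the points and lines of $\mathbb{P}^2$ defined over $\mathbb{F}_q$. A blocking set is a set of points of $\operatorname{PG}(2,q)$ meeting every line; it is minimal if no proper subset of it is a blocking set. *)

theory Defs
  imports Main
begin

text \<open>The projective plane PG(2,q) over a finite field 'a with q = CARD('a) elements.
  Vectors of the underlying 3-dimensional space are triples.\<close>

type_synonym 'a vec3 = "'a \<times> 'a \<times> 'a"

definition scale3 :: "'a::field \<Rightarrow> 'a vec3 \<Rightarrow> 'a vec3" where
  "scale3 c v = (case v of (x, y, z) \<Rightarrow> (c * x, c * y, c * z))"

definition dot3 :: "'a::field vec3 \<Rightarrow> 'a vec3 \<Rightarrow> 'a" where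
  "dot3 v w = (case v of (x, y, z) \<Rightarrow> case w of (a, b, c) \<Rightarrow> x * a + y * b + z * c)"

definition proj_point :: "'a::field vec3 \<Rightarrow> 'a vec3 set" where
  "proj_point v = {scale3 c v | c. c \<noteq> 0}"

definition PG_points :: "'a::{finite,field} vec3 set set" where
  "PG_points = {proj_point v | v. v \<noteq> (0, 0, 0)}"

definition PG_line :: "'a::{finite,field} vec3 \<Rightarrow> 'a vec3 set set" where
  "PG_line w = {P \<in> PG_points. \<forall>v\<in>P. dot3 w v = 0}"

definition PG_lines :: "'a::{finite,field} vec3 set set set" where
  "PG_lines = {PG_line w | w. w \<noteq> (0, 0, 0)}"

definition blocking_set :: "'a::{finite,field} vec3 set set \<Rightarrow> bool" where
  "blocking_set B \<longleftrightarrow> B \<subseteq> PG_points \<and> (\<forall>L\<in>PG_lines. B \<inter> L \<noteq> {})"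

definition minimal_blocking_set :: "'a::{finite,field} vec3 set set \<Rightarrow> bool" where
  "minimal_blocking_set B \<longleftrightarrow> blocking_set B \<and> (\<forall>C. C \<subset> B \<longrightarrow> \<not> blocking_set C)"

end

theory Submission
  imports Defs "HOL-Computational_Algebra.Polynomial"
begin


lemma card_field_zero: "of_nat (card (UNIV::'a set)) = (0::'a::{finite,field})"
proof -
  have "(\<Sum>x\<in>UNIV. x + 1) = (\<Sum>x\<in>UNIV. (x::'a))"
    by (rule sum.reindex_bij_witness[of _ "\<lambda>x. x - 1" "\<lambda>x. x + 1"]) auto
  hence "(\<Sum>x\<in>UNIV. (x::'a)) + of_nat (card (UNIV::'a set)) = (\<Sum>x\<in>UNIV. x)"
    by (simp add: sum.distrib)
  thus ?thesis by simp
qed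

lemma card_ge2: "2 \<le> card (UNIV::('a::{finite,field}) set)"
proof -
  have "{0::'a, 1} \<subseteq> UNIV" by simp
  hence "card {0::'a,1} \<le> card (UNIV::'a set)" by (rule card_mono[OF finite_UNIV])
  thus ?thesis by simp
qed

lemma fermat_field:
  assumes "(x::'a::{finite,field}) \<noteq> 0"
  shows "x ^ (card (UNIV::'a set) - 1) = 1"
proof -
  let ?U = "UNIV - {0::'a}"
  have "(\<Prod>y\<in>?U. x * y) = (\<Prod>y\<in>?U. y)"
    by (rule prod.reindex_bij_witness[of _ "\<lambda>y. y / x" "\<lambda>y. x * y"]) (use assms in auto)
  moreover have "(\<Prod>y\<in>?U. x * y) = x ^ card ?U * (\<Prod>y\<in>?U. y)"
    by (simp add: prod.distrib)
  moreover have "(\<Prod>y\<in>?U. y) \<noteq> 0" by simp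
  moreover have "card ?U = card (UNIV::'a set) - 1" by (simp add: card_Diff_singleton)
  ultimately show ?thesis by simp
qed

lemma power_sum_zero:
  assumes "i < card (UNIV::'a set) - 1"
  shows "(\<Sum>x\<in>UNIV. (x::'a::{finite,field}) ^ i) = 0"
proof (cases "i = 0")
  case True thus ?thesis using card_field_zero by simp
next
  case False
  define P :: "'a poly" where "P = monom 1 i + [:-1:]"
  have degP: "degree P = i" using False unfolding P_def by (subst degree_add_eq_left) (auto simp: degree_monom_eq)
  have P0: "P \<noteq> 0" using degP False by auto
  have roots: "{x. x ^ i = 1} = {x. poly P x = 0}" unfolding P_def by (auto simp: poly_monom)
  have "card {x::'a. x ^ i = 1} \<le> i" using card_poly_roots_bound[OF P0] degP roots by simp
  hence "card {x::'a. x ^ i = 1} < card (UNIV - {0::'a})" using assms by (simp add: card_Diff_singleton)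
  hence "\<not> (UNIV - {0::'a}) \<subseteq> {x. x ^ i = 1}" using card_mono[of "{x::'a. x^i=1}" "UNIV - {0}"] by auto
  then obtain c :: 'a where c: "c \<noteq> 0" "c ^ i \<noteq> 1" by auto
  have "(\<Sum>x\<in>UNIV. (c * x) ^ i) = (\<Sum>x\<in>UNIV. x ^ i)"
    by (rule sum.reindex_bij_witness[of _ "\<lambda>y. y / c" "\<lambda>y. c * y"]) (use c in auto)
  hence "c ^ i * (\<Sum>x\<in>UNIV. x ^ i) = (\<Sum>x\<in>UNIV. x ^ i)"
    by (simp add: power_mult_distrib sum_distrib_left)
  hence "(c ^ i - 1) * (\<Sum>x\<in>UNIV. x ^ i) = 0" by (simp add: algebra_simps)
  thus ?thesis using c by simp
qed

definition mon :: "nat \<Rightarrow> nat \<Rightarrow> nat \<Rightarrow> 'a::field vec3 \<Rightarrow> 'a" where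
  "mon i j k p = (case p of (x, y, z) \<Rightarrow> x ^ i * y ^ j * z ^ k)"

lemma sum_mon:
  "(\<Sum>p\<in>UNIV. mon i j k (p::'a::{finite,field} vec3)) =
     (\<Sum>x\<in>UNIV. (x::'a) ^ i) * (\<Sum>y\<in>UNIV. (y::'a) ^ j) * (\<Sum>z\<in>UNIV. (z::'a) ^ k)"
proof -
  have "(\<Sum>p\<in>UNIV. mon i j k (p::'a vec3)) = (\<Sum>x\<in>UNIV. \<Sum>q\<in>(UNIV::('a\<times>'a) set). mon i j k (x, q))"
    by (simp add: sum.cartesian_product UNIV_Times_UNIV[symmetric] del: UNIV_Times_UNIV)
  also have "\<dots> = (\<Sum>x\<in>UNIV. \<Sum>y\<in>UNIV. \<Sum>z\<in>UNIV. mon i j k (x, y, z))"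
    by (simp add: sum.cartesian_product UNIV_Times_UNIV[symmetric] del: UNIV_Times_UNIV)
  also have "\<dots> = (\<Sum>x\<in>UNIV. \<Sum>y\<in>UNIV. \<Sum>z\<in>UNIV. (x::'a) ^ i * y ^ j * z ^ k)"
    by (simp add: mon_def)
  also have "\<dots> = (\<Sum>x\<in>UNIV. (x::'a) ^ i * (\<Sum>y\<in>UNIV. (y::'a) ^ j * (\<Sum>z\<in>UNIV. (z::'a) ^ k)))"
    by (simp add: sum_distrib_left mult.assoc)
  also have "\<dots> = (\<Sum>x\<in>UNIV. (x::'a) ^ i * ((\<Sum>y\<in>UNIV. (y::'a) ^ j) * (\<Sum>z\<in>UNIV. (z::'a) ^ k)))"
    by (simp only: sum_distrib_right[symmetric])
  also have "\<dots> = (\<Sum>x\<in>UNIV. (x::'a) ^ i) * ((\<Sum>y\<in>UNIV. (y::'a) ^ j) * (\<Sum>z\<in>UNIV. (z::'a) ^ k))"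
    by (rule sum_distrib_right[symmetric])
  finally show ?thesis by (simp add: mult.assoc)
qed


lemma mon_dot: "mon i j k p * dot3 (a::'a::field vec3) p =
   fst a * mon (Suc i) j k p + fst (snd a) * mon i (Suc j) k p + snd (snd a) * mon i j (Suc k) p"
  by (cases a; cases p) (simp add: mon_def dot3_def algebra_simps)

lemma sum_mon_zero:
  assumes "i + j + k < 3 * (card (UNIV::'a set) - 1)"
  shows "(\<Sum>p\<in>UNIV. mon i j k (p::'a::{finite,field} vec3)) = 0"
proof -
  have "i < card (UNIV::'a set) - 1 \<or> j < card (UNIV::'a set) - 1 \<or> k < card (UNIV::'a set) - 1"
    using assms by arith
  thus ?thesis unfolding sum_mon using power_sum_zero[of i] power_sum_zero[of j] power_sum_zero[of k]
    by auto
qed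

lemma deg_base:
  "i + j + k + n < 3 * (card (UNIV::'a set) - 1) \<Longrightarrow>
   (\<Sum>p\<in>UNIV. mon i j k (p::'a::{finite,field} vec3) * dot3 a p ^ n) = 0"
proof (induction n arbitrary: i j k)
  case 0
  then show ?case using sum_mon_zero[of i j k] by simp
next
  case (Suc n)
  have "(\<Sum>p\<in>UNIV. mon i j k (p::'a vec3) * dot3 a p ^ Suc n) =
        (\<Sum>p\<in>UNIV. fst a * (mon (Suc i) j k p * dot3 a p ^ n) + fst (snd a) * (mon i (Suc j) k p * dot3 a p ^ n)
            + snd (snd a) * (mon i j (Suc k) p * dot3 a p ^ n))"
  proof (rule sum.cong[OF refl])
    fix p :: "'a vec3"
    have "mon i j k p * dot3 a p ^ Suc n = (mon i j k p * dot3 a p) * dot3 a p ^ n"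
      by (simp only: power_Suc mult.assoc)
    also have "\<dots> = fst a * (mon (Suc i) j k p * dot3 a p ^ n) + fst (snd a) * (mon i (Suc j) k p * dot3 a p ^ n)
            + snd (snd a) * (mon i j (Suc k) p * dot3 a p ^ n)"
      by (simp only: mon_dot distrib_right mult.assoc)
    finally show "mon i j k p * dot3 a p ^ Suc n = \<dots>" .
  qed
  also have "\<dots> = fst a * (\<Sum>p\<in>UNIV. mon (Suc i) j k p * dot3 a p ^ n) + fst (snd a) * (\<Sum>p\<in>UNIV. mon i (Suc j) k p * dot3 a p ^ n)
            + snd (snd a) * (\<Sum>p\<in>UNIV. mon i j (Suc k) p * dot3 a p ^ n)"
    by (simp only: sum.distrib sum_distrib_left)
  also have "\<dots> = 0"
  proof -
    have z1: "(\<Sum>p\<in>UNIV. mon (Suc i) j k p * dot3 a p ^ n) = 0" by (rule Suc.IH) (use Suc.prems in linarith)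
    have z2: "(\<Sum>p\<in>UNIV. mon i (Suc j) k p * dot3 a p ^ n) = 0" by (rule Suc.IH) (use Suc.prems in linarith)
    have z3: "(\<Sum>p\<in>UNIV. mon i j (Suc k) p * dot3 a p ^ n) = 0" by (rule Suc.IH) (use Suc.prems in linarith)
    show ?thesis by (simp only: z1 z2 z3) simp
  qed
  finally show ?case .
qed

lemma deg_main:
  "finite R \<Longrightarrow> i + j + k + n + card R < 3 * (card (UNIV::'a set) - 1) \<Longrightarrow>
   (\<Sum>p\<in>UNIV. mon i j k (p::'a::{finite,field} vec3) * dot3 a p ^ n * (\<Prod>d\<in>R. dot3 d p - 1)) = 0"
proof (induction R arbitrary: i j k rule: finite_induct)
  case empty
  then show ?case using deg_base[of i j k n a] by simp
next
  case (insert d R)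
  let ?Q = "\<lambda>p. \<Prod>d\<in>R. dot3 d p - 1"
  have "(\<Sum>p\<in>UNIV. mon i j k (p::'a vec3) * dot3 a p ^ n * (\<Prod>d\<in>insert d R. dot3 d p - 1)) =
        (\<Sum>p\<in>UNIV. fst d * (mon (Suc i) j k p * dot3 a p ^ n * ?Q p) + fst (snd d) * (mon i (Suc j) k p * dot3 a p ^ n * ?Q p)
            + snd (snd d) * (mon i j (Suc k) p * dot3 a p ^ n * ?Q p) - mon i j k p * dot3 a p ^ n * ?Q p)"
  proof (rule sum.cong[OF refl])
    fix p :: "'a vec3"
    have "mon i j k p * dot3 a p ^ n * (\<Prod>d\<in>insert d R. dot3 d p - 1) =
          (mon i j k p * dot3 d p) * dot3 a p ^ n * ?Q p - mon i j k p * dot3 a p ^ n * ?Q p"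
      using insert.hyps by (simp add: right_diff_distrib left_diff_distrib mult.assoc mult.left_commute)
    also have "\<dots> = fst d * (mon (Suc i) j k p * dot3 a p ^ n * ?Q p) + fst (snd d) * (mon i (Suc j) k p * dot3 a p ^ n * ?Q p)
            + snd (snd d) * (mon i j (Suc k) p * dot3 a p ^ n * ?Q p) - mon i j k p * dot3 a p ^ n * ?Q p"
      unfolding mon_dot by (simp add: distrib_right mult.assoc)
    finally show "mon i j k p * dot3 a p ^ n * (\<Prod>d\<in>insert d R. dot3 d p - 1) = \<dots>" .
  qed
  also have "\<dots> = fst d * (\<Sum>p\<in>UNIV. mon (Suc i) j k p * dot3 a p ^ n * ?Q p) + fst (snd d) * (\<Sum>p\<in>UNIV. mon i (Suc j) k p * dot3 a p ^ n * ?Q p)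
            + snd (snd d) * (\<Sum>p\<in>UNIV. mon i j (Suc k) p * dot3 a p ^ n * ?Q p) - (\<Sum>p\<in>UNIV. mon i j k p * dot3 a p ^ n * ?Q p)"
    by (simp only: sum.distrib sum_subtractf sum_distrib_left)
  also have "\<dots> = 0"
  proof -
    have c: "card (insert d R) = Suc (card R)" using insert.hyps by simp
    have z1: "(\<Sum>p\<in>UNIV. mon (Suc i) j k p * dot3 a p ^ n * ?Q p) = 0"
      by (rule insert.IH) (use insert.prems c in linarith)
    have z2: "(\<Sum>p\<in>UNIV. mon i (Suc j) k p * dot3 a p ^ n * ?Q p) = 0"
      by (rule insert.IH) (use insert.prems c in linarith)
    have z3: "(\<Sum>p\<in>UNIV. mon i j (Suc k) p * dot3 a p ^ n * ?Q p) = 0"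
      by (rule insert.IH) (use insert.prems c in linarith)
    have z4: "(\<Sum>p\<in>UNIV. mon i j k p * dot3 a p ^ n * ?Q p) = 0"
      by (rule insert.IH) (use insert.prems c in linarith)
    show ?thesis by (simp only: z1 z2 z3 z4) simp
  qed
  finally show ?case .
qed



definition sub3 :: "'a::field vec3 \<Rightarrow> 'a vec3 \<Rightarrow> 'a vec3" where
  "sub3 p w = (case p of (a, b, c) \<Rightarrow> case w of (x, y, z) \<Rightarrow> (a - x, b - y, c - z))"

definition cross :: "'a::field vec3 \<Rightarrow> 'a vec3 \<Rightarrow> 'a vec3" where
  "cross u v = (case u of (a1, a2, a3) \<Rightarrow> case v of (b1, b2, b3) \<Rightarrow>
     (a2 * b3 - a3 * b2, a3 * b1 - a1 * b3, a1 * b2 - a2 * b1))"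

lemma dot3_scale: "dot3 w (scale3 c v) = c * dot3 w v"
  by (cases w; cases v) (simp add: dot3_def scale3_def algebra_simps)

lemma dot3_comm: "dot3 w v = dot3 v w"
  by (cases w; cases v) (simp add: dot3_def algebra_simps)

lemma dot3_sub: "dot3 (sub3 p w) v = dot3 p v - dot3 w v"
  by (cases w; cases v; cases p) (simp add: dot3_def sub3_def algebra_simps)

lemma dot3_zero: "dot3 (0,0,0) v = 0"
  by (cases v) (simp add: dot3_def)

lemma scale3_one: "scale3 1 v = v"
  by (cases v) (simp add: scale3_def)

lemma scale3_scale: "scale3 a (scale3 b v) = scale3 (a * b) v"
  by (cases v) (simp add: scale3_def)

lemma in_proj: "v \<in> proj_point v"
  unfolding proj_point_def using scale3_one by (metis (mono_tags, lifting) mem_Collect_eq one_neq_zero)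

lemma proj_scale: "(c::'a::field) \<noteq> 0 \<Longrightarrow> proj_point (scale3 c v) = proj_point v"
proof -
  assume c: "c \<noteq> 0"
  have 1: "\<exists>ca. scale3 x (scale3 c v) = scale3 ca v \<and> ca \<noteq> 0" if "x \<noteq> 0" for x
    using that c by (intro exI[of _ "x * c"]) (simp add: scale3_scale)
  have 2: "\<exists>ca. scale3 x v = scale3 ca (scale3 c v) \<and> ca \<noteq> 0" if "x \<noteq> 0" for x
    using that c by (intro exI[of _ "x / c"]) (simp add: scale3_scale)
  show ?thesis unfolding proj_point_def using 1 2 by blast
qed

lemma scale3_nz: "(v::'a::field vec3) \<noteq> (0,0,0) \<Longrightarrow> c \<noteq> 0 \<Longrightarrow> scale3 c v \<noteq> (0,0,0)"
  by (cases v) (auto simp: scale3_def)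

lemma on_line:
  assumes "(v::'a::{finite,field} vec3) \<noteq> (0,0,0)"
  shows "proj_point v \<in> PG_line u \<longleftrightarrow> dot3 u v = 0"
proof
  assume "proj_point v \<in> PG_line u"
  thus "dot3 u v = 0" unfolding PG_line_def using in_proj by blast
next
  assume h: "dot3 u v = 0"
  have "proj_point v \<in> PG_points" unfolding PG_points_def using assms by blast
  moreover have "\<forall>x\<in>proj_point v. dot3 u x = 0"
    unfolding proj_point_def using h by (auto simp: dot3_scale)
  ultimately show "proj_point v \<in> PG_line u" unfolding PG_line_def by blast
qed

lemma pt_rep: "P \<in> PG_points \<Longrightarrow> \<exists>v. v \<noteq> (0,0,0) \<and> P = proj_point v"
  unfolding PG_points_def by blast

lemma cross_par:
  assumes "cross a b = (0,0,0)" "b \<noteq> ((0::'a::field),0,0)"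
  shows "\<exists>c. a = scale3 c b"
proof -
  obtain a1 a2 a3 where a: "a = (a1, a2, a3)" by (cases a) auto
  obtain b1 b2 b3 where b: "b = (b1, b2, b3)" by (cases b) auto
  have e: "a2 * b3 = a3 * b2" "a3 * b1 = a1 * b3" "a1 * b2 = a2 * b1"
    using assms(1) by (auto simp: a b cross_def)
  show ?thesis
  proof (cases "b1 \<noteq> 0")
    case True
    show ?thesis
      apply (rule exI[of _ "a1 / b1"])
      using True e by (auto simp: a b scale3_def field_simps ac_simps)
  next
    case f1: False
    show ?thesis
    proof (cases "b2 \<noteq> 0")
      case True
      show ?thesis
        apply (rule exI[of _ "a2 / b2"])
        using True e f1 by (auto simp: a b scale3_def field_simps ac_simps)
    next
      case False
      hence "b3 \<noteq> 0" using f1 assms(2) b by auto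
      thus ?thesis
        apply (intro exI[of _ "a3 / b3"])
        using False e f1 by (auto simp: a b scale3_def field_simps ac_simps)
    qed
  qed
qed

lemma cross_triple:
  "dot3 w v = 0 \<Longrightarrow> dot3 p v = 0 \<Longrightarrow> cross v (cross w p) = ((0::'a::field),0,0)"
proof -
  assume h: "dot3 w v = 0" "dot3 p v = 0"
  obtain v1 v2 v3 where v: "v = (v1, v2, v3)" by (cases v) auto
  obtain w1 w2 w3 where w: "w = (w1, w2, w3)" by (cases w) auto
  obtain p1 p2 p3 where p: "p = (p1, p2, p3)" by (cases p) auto
  have h1: "w1 * v1 + w2 * v2 + w3 * v3 = 0" and h2: "p1 * v1 + p2 * v2 + p3 * v3 = 0"
    using h by (auto simp: v w p dot3_def)
  have "cross v (cross w p) = (w1 * (p1 * v1 + p2 * v2 + p3 * v3) - p1 * (w1 * v1 + w2 * v2 + w3 * v3),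
      w2 * (p1 * v1 + p2 * v2 + p3 * v3) - p2 * (w1 * v1 + w2 * v2 + w3 * v3),
      w3 * (p1 * v1 + p2 * v2 + p3 * v3) - p3 * (w1 * v1 + w2 * v2 + w3 * v3))"
    by (simp add: v w p cross_def algebra_simps)
  thus ?thesis using h1 h2 by simp
qed

lemma cross_anti: "cross a b = (0,0,0) \<Longrightarrow> cross b a = ((0::'a::field),0,0)"
  by (cases a; cases b) (auto simp: cross_def ac_simps)

lemma two_pts:
  assumes n: "cross w p \<noteq> ((0::'a::{finite,field}),0,0)"
    and v: "v \<noteq> (0,0,0)" "dot3 w v = 0" "dot3 p v = 0"
    and v': "v' \<noteq> (0,0,0)" "dot3 w v' = 0" "dot3 p v' = 0"
  shows "proj_point v = proj_point v'"
proof -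
  obtain c where c: "v = scale3 c (cross w p)" using cross_par[OF cross_triple[OF v(2,3)] n] by blast
  obtain c' where c': "v' = scale3 c' (cross w p)" using cross_par[OF cross_triple[OF v'(2,3)] n] by blast
  have "c \<noteq> 0" using v(1) c by (cases "cross w p") (auto simp: scale3_def)
  have "c' \<noteq> 0" using v'(1) c' by (cases "cross w p") (auto simp: scale3_def)
  have "v' = scale3 (c' / c) v" using c c' \<open>c \<noteq> 0\<close> by (simp add: scale3_scale)
  thus ?thesis using proj_scale[of "c' / c" v] \<open>c \<noteq> 0\<close> \<open>c' \<noteq> 0\<close> by simp
qed

lemma exists_dot_one: "w \<noteq> ((0::'a::field),0,0) \<Longrightarrow> \<exists>ov. dot3 w ov = 1"
proof -
  assume "w \<noteq> (0,0,0)"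
  then obtain w1 w2 w3 where w: "w = (w1, w2, w3)" "w1 \<noteq> 0 \<or> w2 \<noteq> 0 \<or> w3 \<noteq> 0" by (cases w) auto
  thus ?thesis
    by (elim disjE) (rule exI[of _ "(1/w1, 0, 0)"] exI[of _ "(0, 1/w2, 0)"] exI[of _ "(0, 0, 1/w3)"], simp add: dot3_def)+
qed

lemma blocking_mono: "blocking_set C \<Longrightarrow> C \<subseteq> C' \<Longrightarrow> C' \<subseteq> PG_points \<Longrightarrow> blocking_set C'"
  unfolding blocking_set_def by blast



lemma key:
  fixes B :: "('a::{finite,field}) vec3 set set"
  assumes bl: "blocking_set B"
    and cardB: "card B \<le> 2 * card (UNIV :: 'a set)"
    and w: "w \<noteq> (0,0,0)"
    and noE: "\<forall>Z \<in> B \<inter> PG_line w. blocking_set (B - {Z})"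
  shows False
proof -
  define q where "q = card (UNIV :: 'a set)"
  have q2: "q \<ge> 2" unfolding q_def by (rule card_ge2)
  define l where "l = PG_line w"
  have lL: "l \<in> PG_lines" unfolding l_def PG_lines_def using w by blast
  have BP: "B \<subseteq> PG_points" using bl unfolding blocking_set_def by blast
  have Bl: "B \<inter> l \<noteq> {}" using bl lL unfolding blocking_set_def by blast
  have notsing: "B \<inter> l \<noteq> {Z}" for Z
  proof
    assume h: "B \<inter> l = {Z}"
    hence "blocking_set (B - {Z})" using noE l_def by blast
    hence "(B - {Z}) \<inter> l \<noteq> {}" using lL unfolding blocking_set_def by blast
    thus False using h by blast
  qed
  have finB: "finite B" by simp
  have cBl: "card (B \<inter> l) \<ge> 2"
  proof -
    obtain x where x: "x \<in> B \<inter> l" using Bl by blast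
    obtain y where y: "y \<in> B \<inter> l" "y \<noteq> x" using notsing[of x] x by blast
    have "card {x, y} \<le> card (B \<inter> l)" by (rule card_mono) (use x y in auto)
    thus ?thesis using y by simp
  qed
  define D where "D = B - l"
  have cD: "card D \<le> 2 * q - 2"
  proof -
    have "card D = card B - card (B \<inter> l)" unfolding D_def by (rule card_Diff_subset_Int) simp
    thus ?thesis using cardB cBl unfolding q_def by linarith
  qed
  have norm: "\<exists>d. proj_point d = P \<and> dot3 w d = 1 \<and> d \<noteq> (0,0,0)" if "P \<in> D" for P
  proof -
    have "P \<in> PG_points" using that BP unfolding D_def by blast
    then obtain v where v: "v \<noteq> (0,0,0)" "P = proj_point v" using pt_rep by blast
    have "P \<notin> l" using that unfolding D_def by blast
    hence "proj_point v \<notin> PG_line w" using v(2) unfolding l_def by simp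
    hence nz: "dot3 w v \<noteq> 0" using on_line[OF v(1), of w] by blast
    define d where "d = scale3 (1 / dot3 w v) v"
    have "1 / dot3 w v \<noteq> 0" using nz by simp
    hence "proj_point d = P" unfolding d_def v(2) by (rule proj_scale)
    moreover have "dot3 w d = 1" unfolding d_def dot3_scale using nz by simp
    moreover have "d \<noteq> (0,0,0)" unfolding d_def by (rule scale3_nz[OF v(1)]) (use nz in simp)
    ultimately show ?thesis by blast
  qed
  define rep where "rep P = (SOME d. proj_point d = P \<and> dot3 w d = 1 \<and> d \<noteq> (0,0,0))" for P
  have rep: "proj_point (rep P) = P \<and> dot3 w (rep P) = 1 \<and> rep P \<noteq> (0,0,0)" if "P \<in> D" for P
    unfolding rep_def using someI_ex[OF norm[OF that]] .
  obtain ov where ov: "dot3 w ov = 1" "D \<noteq> {} \<Longrightarrow> proj_point ov \<in> D"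
  proof (cases "D = {}")
    case True thus ?thesis using exists_dot_one[OF w] that by blast
  next
    case False
    then obtain P0 where "P0 \<in> D" by blast
    thus ?thesis using rep[of P0] that by metis
  qed
  define R where "R = rep ` (D - {proj_point ov})"
  have finR: "finite R" by simp
  have cR: "card R < 2 * q - 2"
  proof -
    have "card R \<le> card (D - {proj_point ov})" unfolding R_def by (rule card_image_le) simp
    moreover have "card (D - {proj_point ov}) < 2 * q - 2"
    proof (cases "D = {}")
      case True thus ?thesis using q2 by simp
    next
      case False
      hence "card (D - {proj_point ov}) = card D - 1" using ov(2) by (simp add: card_Diff_singleton)
      moreover have "card D \<ge> 1" using False by (simp add: Suc_leI card_gt_0_iff)
      ultimately show ?thesis using cD q2 by linarith
    qed
    ultimately show ?thesis by linarith
  qed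
  define F where "F p = (\<Prod>d\<in>R. dot3 d p - 1)" for p
  have vanish: "F p = 0" if p: "dot3 ov p = 0" "p \<noteq> (0,0,0)" for p
  proof -
    define u where "u = sub3 p w"
    have uo: "dot3 u ov = -1" unfolding u_def dot3_sub using p(1) ov(1) by (simp add: dot3_comm)
    have u0: "u \<noteq> (0,0,0)" using uo dot3_zero[of ov] by auto
    define m where "m = PG_line u"
    have mL: "m \<in> PG_lines" unfolding m_def PG_lines_def using u0 by blast
    have ncross: "cross w p \<noteq> (0,0,0)"
    proof
      assume "cross w p = (0,0,0)"
      then obtain c where c: "p = scale3 c w" using cross_par[OF cross_anti] w by blast
      have "dot3 ov p = c" using c ov(1) by (simp add: dot3_scale dot3_comm)
      hence "c = 0" using p(1) by simp
      hence "p = (0,0,0)" using c by (cases w) (simp add: scale3_def)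
      thus False using p(2) by simp
    qed
    have "\<exists>P \<in> B \<inter> m. P \<notin> l"
    proof (rule ccontr)
      assume na: "\<not> (\<exists>P \<in> B \<inter> m. P \<notin> l)"
      obtain Z where Z: "Z \<in> B \<inter> m" using bl mL unfolding blocking_set_def by blast
      have Zl: "Z \<in> l" using na Z by blast
      have "Z \<in> B \<inter> PG_line w" using Z Zl unfolding l_def by blast
      hence "blocking_set (B - {Z})" using noE by blast
      then obtain W where W: "W \<in> (B - {Z}) \<inter> m" using mL unfolding blocking_set_def by blast
      have Wl: "W \<in> l" using na W by blast
      have "Z \<in> PG_points" using Z BP by blast
      then obtain z where z: "z \<noteq> (0,0,0)" "Z = proj_point z" using pt_rep by blast
      have "W \<in> PG_points" using W BP by blast
      then obtain z' where z': "z' \<noteq> (0,0,0)" "W = proj_point z'" using pt_rep by blast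
      have "proj_point z \<in> PG_line w" "proj_point z \<in> PG_line u"
        using z(2) Zl Z unfolding l_def m_def by auto
      hence "dot3 w z = 0" "dot3 u z = 0" using on_line[OF z(1)] by auto
      hence zp: "dot3 w z = 0" "dot3 p z = 0" unfolding u_def dot3_sub by auto
      have "proj_point z' \<in> PG_line w" "proj_point z' \<in> PG_line u"
        using z'(2) Wl W unfolding l_def m_def by auto
      hence "dot3 w z' = 0" "dot3 u z' = 0" using on_line[OF z'(1)] by auto
      hence zp': "dot3 w z' = 0" "dot3 p z' = 0" unfolding u_def dot3_sub by auto
      have "Z = W" using two_pts[OF ncross z(1) zp z'(1) zp'] z(2) z'(2) by simp
      thus False using W by blast
    qed
    then obtain P where P: "P \<in> B" "P \<in> m" "P \<notin> l" by blast
    have PD: "P \<in> D" using P D_def by blast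
    have "P \<noteq> proj_point ov"
    proof
      assume "P = proj_point ov"
      hence "ov \<in> P" using in_proj by simp
      hence "dot3 u ov = 0" using P(2) unfolding m_def PG_line_def by blast
      thus False using uo by simp
    qed
    hence dR: "rep P \<in> R" unfolding R_def using PD by blast
    have "rep P \<in> P" using rep[OF PD] in_proj by metis
    hence "dot3 u (rep P) = 0" using P(2) unfolding m_def PG_line_def by blast
    hence "dot3 (rep P) p - 1 = 0" using rep[OF PD] unfolding u_def dot3_sub by (simp add: dot3_comm)
    thus "F p = 0" unfolding F_def using dR finR by (metis prod_zero_iff)
  qed
  have F0: "F (0,0,0) \<noteq> 0"
    unfolding F_def by (simp add: dot3_comm[of _ "(0,0,0)"] dot3_zero)
  have trm: "(1 - dot3 ov p ^ (q - 1)) * F p = (if p = (0,0,0) then F (0,0,0) else 0)" for p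
  proof (cases "p = (0,0,0)")
    case True
    have "dot3 ov p = 0" using True by (cases ov) (simp add: dot3_def)
    thus ?thesis using True q2 by simp
  next
    case False
    show ?thesis
    proof (cases "dot3 ov p = 0")
      case True thus ?thesis using vanish[OF True False] False by simp
    next
      case nz: False
      have "dot3 ov p ^ (q - 1) = 1" unfolding q_def by (rule fermat_field[OF nz])
      thus ?thesis using False by simp
    qed
  qed
  have "(\<Sum>p\<in>UNIV. (1 - dot3 ov p ^ (q - 1)) * F p) = F (0,0,0)"
    unfolding trm by simp
  moreover have "(\<Sum>p\<in>UNIV. (1 - dot3 ov p ^ (q - 1)) * F p) =
     (\<Sum>p\<in>UNIV. mon 0 0 0 p * dot3 ov p ^ 0 * F p) - (\<Sum>p\<in>UNIV. mon 0 0 0 p * dot3 ov p ^ (q - 1) * F p)"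
    by (simp add: mon_def left_diff_distrib sum_subtractf split: prod.splits)
  moreover have "(\<Sum>p\<in>UNIV. mon 0 0 0 p * dot3 ov p ^ 0 * F p) = 0"
    unfolding F_def by (rule deg_main[OF finR]) (use cR q2 q_def in simp)
  moreover have "(\<Sum>p\<in>UNIV. mon 0 0 0 p * dot3 ov p ^ (q - 1) * F p) = 0"
    unfolding F_def by (rule deg_main[OF finR]) (use cR q2 q_def in simp)
  ultimately show False using F0 by simp
qed


theorem mainTheorem14:
  fixes B :: "('a::{finite,field}) vec3 set set"
  assumes "blocking_set B"
    and "card B \<le> 2 * card (UNIV :: 'a set)"
  shows "\<exists>!M. M \<subseteq> B \<and> minimal_blocking_set M"
proof -
  define E where "E = {P \<in> B. \<not> blocking_set (B - {P})}"
  have BP: "B \<subseteq> PG_points" using assms(1) unfolding blocking_set_def by blast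
  have EB: "E \<subseteq> B" unfolding E_def by blast
  have Eblock: "blocking_set E"
    unfolding blocking_set_def
  proof (intro conjI ballI)
    show "E \<subseteq> PG_points" using EB BP by blast
  next
    fix L :: "'a vec3 set set" assume L: "L \<in> PG_lines"
    then obtain w where w: "w \<noteq> (0,0,0)" "L = PG_line w" unfolding PG_lines_def by blast
    show "E \<inter> L \<noteq> {}"
    proof
      assume h: "E \<inter> L = {}"
      have "\<forall>Z \<in> B \<inter> PG_line w. blocking_set (B - {Z})"
      proof
        fix Z assume "Z \<in> B \<inter> PG_line w"
        hence "Z \<in> B" "Z \<notin> E" using h w(2) by blast+
        thus "blocking_set (B - {Z})" unfolding E_def by blast
      qed
      thus False using key[OF assms(1) assms(2) w(1)] by blast
    qed
  qed
  have sub: "E \<subseteq> M" if "M \<subseteq> B" "blocking_set M" for M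
  proof
    fix P assume P: "P \<in> E"
    show "P \<in> M"
    proof (rule ccontr)
      assume "P \<notin> M"
      hence "M \<subseteq> B - {P}" using that(1) by blast
      moreover have "B - {P} \<subseteq> PG_points" using BP by blast
      ultimately have "blocking_set (B - {P})" using blocking_mono[OF that(2)] by blast
      thus False using P unfolding E_def by blast
    qed
  qed
  have Emin: "minimal_blocking_set E"
    unfolding minimal_blocking_set_def
  proof (intro conjI allI impI)
    show "blocking_set E" by (rule Eblock)
  next
    fix C assume C: "C \<subset> E"
    show "\<not> blocking_set C"
    proof
      assume "blocking_set C"
      hence "E \<subseteq> C" using sub C EB by blast
      thus False using C by blast
    qed
  qed
  show ?thesis
  proof (rule ex1I[of _ E])
    show "E \<subseteq> B \<and> minimal_blocking_set E" using EB Emin by blast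
  next
    fix M assume M: "M \<subseteq> B \<and> minimal_blocking_set M"
    hence "E \<subseteq> M" using sub unfolding minimal_blocking_set_def by blast
    moreover have "\<not> E \<subset> M" using M Eblock unfolding minimal_blocking_set_def by blast
    ultimately show "M = E" by blast
  qed
qed

end
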